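(* Let $d=3$ and $r\in\mathbb{R}^8\setminus\{0\}$ be such that $\cos(3\phi(r))\neq0$, where $\phi(r)\in[-\pi/6,\pi/6]$ is defined by $\sin(3\phi(r))=-\frac{3\sqrt3}{2\|r\|^3}\det(r\cdot\Lambda)$. Then the eigenvalues of $r\cdot\Lambda$ are $\frac{2}{\sqrt3}\|r\|\sin(\phi(r)+2\pi k/3)$, $k=0,1,2$, so that $K_3(r)=\sum_{k=0}^2\exp\{-i\sqrt2\|r\|\sin(\phi(r)+2\pi k/3)\}$, and $$\nabla_rK_3(r)=-3i\sqrt{\tfrac23}\Bigl(F_1(r)\,p(r)+F_2(r)\,\frac{r}{\|r\|}\Bigr),$$ where $p(r)\in\mathbb{R}^8$, $p^{(m)}(r)=\sum_{i,j=1}^8\frac{r_ir_jd_{ijm}}{\|r\|^2}$, and $$F_1(r)=\sum_{k=0}^2\frac{\exp\{-i\sqrt2\|r\|\sin(\phi(r)+2\pi k/3)\}}{1-2\cos(2(\phi(r)+2\pi k/3))},\qquad F_2(r)=\frac{2}{\sqrt3}\sum_{k=0}^2\sin(\phi(r)+2\pi k/3)\frac{\exp\{-i\sqrt2\|r\|\sin(\phi(r)+2\pi k/3)\}}{1-2\cos(2(\phi(r)+2\pi k/3))}.$$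
   Context: $\Lambda=(\Lambda_1,\dots,\Lambda_8)$ are the standard Gell-Mann matrices (traceless Hermitian $3\times3$, $\mathrm{tr}(\Lambda_k\Lambda_m)=2\delta_{km}$, $\Lambda_k\Lambda_m=\frac23\delta_{km}\mathbb{I}+\sum_j(d_{kmj}+if_{kmj})\Lambda_j$); the nonzero symmetric structure constants are, up to permutation of indices, $d_{146}=d_{157}=d_{256}=d_{344}=d_{355}=\tfrac12$, $d_{247}=d_{366}=d_{377}=-\tfrac12$, $d_{118}=d_{228}=d_{338}=\tfrac1{\sqrt3}$, $d_{888}=-\tfrac1{\sqrt3}$, $d_{448}=d_{558}=d_{668}=d_{778}=-\tfrac1{2\sqrt3}$. $r\cdot\Lambda=\sum_jr_j\Lambda_j$, $\|r\|$ is the Euclidean norm on $\mathbb{R}^8$, and $K_3(r):=\mathrm{tr}\exp\{-i\sqrt{3/2}\,(r\cdot\Lambda)\}$. *)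

theory Defs
  imports "HOL-Analysis.Analysis" "HOL-Library.Numeral_Type"
begin

(* Indices of type 3 are 1, 2, 3 (note 3 = 0 in the ring 3, but 1,2,3 are the three distinct
   elements).  Indices of type 8 are identified with 1..8 via idx8. *)

definition idx8 :: "8 \<Rightarrow> nat" where
  "idx8 j = nat (Rep_bit0 j) + 1"

definition mk3 :: "complex list list \<Rightarrow> complex^3^3" where
  "mk3 xss = (\<chi> a b. xss ! (nat (Rep_bit1 a)) ! (nat (Rep_bit1 b)))"

definition gellmann :: "nat \<Rightarrow> complex^3^3" where
  "gellmann k =
    (if k = 1 then mk3 [[0,1,0],[1,0,0],[0,0,0]]
     else if k = 2 then mk3 [[0,-\<i>,0],[\<i>,0,0],[0,0,0]]
     else if k = 3 then mk3 [[1,0,0],[0,-1,0],[0,0,0]]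
     else if k = 4 then mk3 [[0,0,1],[0,0,0],[1,0,0]]
     else if k = 5 then mk3 [[0,0,-\<i>],[0,0,0],[\<i>,0,0]]
     else if k = 6 then mk3 [[0,0,0],[0,0,1],[0,1,0]]
     else if k = 7 then mk3 [[0,0,0],[0,0,-\<i>],[0,\<i>,0]]
     else if k = 8 then mk3 [[1/sqrt 3,0,0],[0,1/sqrt 3,0],[0,0,-2/sqrt 3]]
     else 0)"

definition rLam :: "real^8 \<Rightarrow> complex^3^3" where
  "rLam r = (\<Sum>j\<in>UNIV. r $ j *\<^sub>R gellmann (idx8 j))"

(* symmetric structure constants d_{ijm}, given up to permutation of indices *)
definition dsym :: "nat \<Rightarrow> nat \<Rightarrow> nat \<Rightarrow> real" where
  "dsym i j m = (let s = sort [i, j, m] in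
     if s \<in> {[1,4,6],[1,5,7],[2,5,6],[3,4,4],[3,5,5]} then 1/2
     else if s \<in> {[2,4,7],[3,6,6],[3,7,7]} then -1/2
     else if s \<in> {[1,1,8],[2,2,8],[3,3,8]} then 1 / sqrt 3
     else if s = [8,8,8] then -1 / sqrt 3
     else if s \<in> {[4,4,8],[5,5,8],[6,6,8],[7,7,8]} then -1 / (2 * sqrt 3)
     else 0)"

fun matpow :: "complex^3^3 \<Rightarrow> nat \<Rightarrow> complex^3^3" where
  "matpow A 0 = mat 1"
| "matpow A (Suc n) = A ** matpow A n"

definition mexp :: "complex^3^3 \<Rightarrow> complex^3^3" where
  "mexp A = (\<Sum>n. (1 / fact n) *\<^sub>R matpow A n)"

definition K3 :: "real^8 \<Rightarrow> complex" where
  "K3 r = trace (mexp (mat (- \<i> * complex_of_real (sqrt (3/2))) ** rLam r))"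

definition phi :: "real^8 \<Rightarrow> real" where
  "phi r = (THE \<phi>. \<phi> \<in> {-pi/6 .. pi/6} \<and>
      complex_of_real (sin (3 * \<phi>)) =
        - complex_of_real (3 * sqrt 3 / (2 * norm r ^ 3)) * det (rLam r))"

definition pvec :: "real^8 \<Rightarrow> real^8" where
  "pvec r = (\<chi> m. \<Sum>i\<in>UNIV. \<Sum>j\<in>UNIV.
      r $ i * r $ j * dsym (idx8 i) (idx8 j) (idx8 m) / norm r ^ 2)"

definition theta :: "real^8 \<Rightarrow> nat \<Rightarrow> real" where
  "theta r k = phi r + 2 * pi * real k / 3"

definition F1 :: "real^8 \<Rightarrow> complex" where
  "F1 r = (\<Sum>k\<le>2. exp (- \<i> * complex_of_real (sqrt 2 * norm r * sin (theta r k)))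
                   / complex_of_real (1 - 2 * cos (2 * theta r k)))"

definition F2 :: "real^8 \<Rightarrow> complex" where
  "F2 r = complex_of_real (2 / sqrt 3) * (\<Sum>k\<le>2. complex_of_real (sin (theta r k)) *
             exp (- \<i> * complex_of_real (sqrt 2 * norm r * sin (theta r k)))
                   / complex_of_real (1 - 2 * cos (2 * theta r k)))"

end

theory Submission
  imports Defs
begin

lemma UNIV8: "(UNIV::8 set) = {0,1,2,3,4,5,6,7}"
proof -
  have "card {0,1,2,3,4,5,6,7::8} = CARD(8)" by simp
  from card_subset_eq[of UNIV "{0,1,2,3,4,5,6,7::8}"] this show ?thesis by simp
qed


lemma sum8: "sum f (UNIV::8 set) = f 0 + (f 1 + (f 2 + (f 3 + (f 4 + (f 5 + (f 6 + f 7))))))"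
  unfolding UNIV8
  apply (subst sum.insert, simp, simp)+
  by simp
lemma idx8_simps: "idx8 0 = 1" "idx8 1 = 2" "idx8 2 = 3" "idx8 3 = 4" "idx8 4 = 5" "idx8 5 = 6" "idx8 6 = 7" "idx8 7 = 8"
  by (simp_all add: idx8_def bit0.Rep_numeral bit0.Rep_0 bit0.Rep_1)
lemma mk3_simps: "mk3 xss $ 1 $ 1 = xss!1!1" "mk3 xss $ 1 $ 2 = xss!1!2" "mk3 xss $ 1 $ 3 = xss!1!0"
  "mk3 xss $ 2 $ 1 = xss!2!1" "mk3 xss $ 2 $ 2 = xss!2!2" "mk3 xss $ 2 $ 3 = xss!2!0"
  "mk3 xss $ 3 $ 1 = xss!0!1" "mk3 xss $ 3 $ 2 = xss!0!2" "mk3 xss $ 3 $ 3 = xss!0!0"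
  by (simp_all add: mk3_def bit1.Rep_numeral bit1.Rep_1)
lemma rLam_nth: "rLam r $ a $ b = (\<Sum>j\<in>UNIV. complex_of_real (r $ j) * gellmann (idx8 j) $ a $ b)"
  unfolding rLam_def sum_component vector_scaleR_component by (simp add: scaleR_conv_of_real)
lemma gm_eqs: "gellmann 1 = mk3 [[0,1,0],[1,0,0],[0,0,0]]"
  "gellmann 2 = mk3 [[0,-\<i>,0],[\<i>,0,0],[0,0,0]]"
  "gellmann 3 = mk3 [[1,0,0],[0,-1,0],[0,0,0]]"
  "gellmann 4 = mk3 [[0,0,1],[0,0,0],[1,0,0]]"
  "gellmann 5 = mk3 [[0,0,-\<i>],[0,0,0],[\<i>,0,0]]"
  "gellmann 6 = mk3 [[0,0,0],[0,0,1],[0,1,0]]"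
  "gellmann 7 = mk3 [[0,0,0],[0,0,-\<i>],[0,\<i>,0]]"
  "gellmann 8 = mk3 [[1/sqrt 3,0,0],[0,1/sqrt 3,0],[0,0,-2/sqrt 3]]"
  by (simp_all add: gellmann_def)
lemma rLam_entries:
  "rLam r $ 1 $ 1 = of_real (- r$2 + r$7 / sqrt 3)"
  "rLam r $ 1 $ 2 = of_real (r$5) - \<i> * of_real (r$6)"
  "rLam r $ 1 $ 3 = of_real (r$0) + \<i> * of_real (r$1)"
  "rLam r $ 2 $ 1 = of_real (r$5) + \<i> * of_real (r$6)"
  "rLam r $ 2 $ 2 = of_real (- 2 * r$7 / sqrt 3)"
  "rLam r $ 2 $ 3 = of_real (r$3) + \<i> * of_real (r$4)"
  "rLam r $ 3 $ 1 = of_real (r$0) - \<i> * of_real (r$1)"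
  "rLam r $ 3 $ 2 = of_real (r$3) - \<i> * of_real (r$4)"
  "rLam r $ 3 $ 3 = of_real (r$2 + r$7 / sqrt 3)"
  unfolding rLam_nth sum8 idx8_simps gm_eqs mk3_simps
  by (simp_all add: of_real_def algebra_simps)

definition c2 :: "complex^3^3 \<Rightarrow> complex" where
  "c2 M = M$1$1*M$2$2 - M$1$2*M$2$1 + M$1$1*M$3$3 - M$1$3*M$3$1 + M$2$2*M$3$3 - M$2$3*M$3$2"

lemma mat_nth: "mat x $ i $ j = (if i = j then x else 0)"
  by (simp add: mat_def)

lemma charpoly3: "det (mat x - (M::complex^3^3)) = x^3 - trace M * x^2 + c2 M * x - det M"
  by (simp add: det_3 mat_nth trace_def sum_3 c2_def algebra_simps power2_eq_square power3_eq_cube)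

lemma trace_sq3: "trace ((M::complex^3^3) ** M) = trace M ^ 2 - 2 * c2 M"
  by (simp add: matrix_matrix_mult_def trace_def sum_3 c2_def algebra_simps power2_eq_square)

lemma CH3: "(M::complex^3^3) ** (M ** M) = mat (trace M) ** (M ** M) - mat (c2 M) ** M + mat (det M)"
  by (simp add: vec_eq_iff forall_3 matrix_matrix_mult_def sum_3 mat_nth trace_def c2_def det_3 algebra_simps)

lemma mat_mult_nth: "(mat c ** (M::'a::comm_ring_1^'n^'m)) $ i $ j = c * M$i$j"
  by (simp add: matrix_matrix_mult_def mat_def if_distrib if_distribR sum.delta cong: if_cong)

lemma mmult_nth: "(A ** B) $ i $ j = (\<Sum>k\<in>UNIV. A$i$k * B$k$j)"
  by (simp add: matrix_matrix_mult_def)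

lemma mat_comm: "(M::'a::comm_ring_1^'n^'m) ** (mat c ** N) = mat c ** (M ** N)"
  unfolding vec_eq_iff mmult_nth[of M] mat_mult_nth
  by (simp add: mmult_nth sum_distrib_left mult_ac)

lemma mat_mat: "mat a ** (mat b ** (N::'a::comm_ring_1^'n^'m)) = mat (a*b) ** N"
  by (simp add: vec_eq_iff mat_mult_nth mult_ac)

lemma trace_mat_mult: "trace (mat c ** (M::'a::comm_ring_1^'n^'n)) = c * trace M"
  by (simp add: trace_def mat_mult_nth sum_distrib_left)

lemma matrix_sub_rdistrib: "((A::'a::comm_ring_1^'n^'m) - B) ** C = A ** C - B ** C"
  by (simp add: vec_eq_iff matrix_matrix_mult_def algebra_simps sum_subtractf)

lemma matrix_add_rdistrib': "((A::'a::comm_ring_1^'n^'m) + B) ** C = A ** C + B ** C"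
  by (simp add: vec_eq_iff matrix_matrix_mult_def algebra_simps sum.distrib)

lemma matpow_smul: "matpow (mat c ** A) n = mat (c^n) ** matpow A n"
proof (induction n)
  case 0 then show ?case by simp
next
  case (Suc n)
  have "matpow (mat c ** A) (Suc n) = (mat c ** A) ** (mat (c^n) ** matpow A n)"
    using Suc by simp
  also have "\<dots> = mat c ** (A ** (mat (c^n) ** matpow A n))"
    by (simp add: matrix_mul_assoc)
  also have "\<dots> = mat (c^Suc n) ** matpow A (Suc n)"
    unfolding mat_comm[of A] mat_mat by simp
  finally show ?case .
qed

lemma quad_zero:
  fixes a b c :: complex
  assumes "\<And>x. a*x^2 + b*x + c = 0"
  shows "a = 0" "b = 0" "c = 0"
proof -
  have c0: "c = 0" using assms[of 0] by simp
  have p: "a + b = 0" using assms[of 1] c0 by simp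
  have m: "a - b = 0" using assms[of "-1"] c0 by simp
  have "2*a = (a+b) + (a-b)" by simp
  then have a0: "a = 0" using p m by simp
  show "a = 0" by (rule a0)
  show "b = 0" using p a0 by simp
  show "c = 0" by (rule c0)
qed

lemma coeffs3:
  fixes t c d l0 l1 l2 :: complex
  assumes h: "\<And>x. x^3 - t*x^2 + c*x - d = (x - l0)*(x - l1)*(x - l2)"
  shows "t = l0 + l1 + l2" "c = l0*l1 + l0*l2 + l1*l2" "d = l0*l1*l2"
proof -
  have q: "((l0+l1+l2) - t)*x^2 + (c - (l0*l1 + l0*l2 + l1*l2))*x + (l0*l1*l2 - d) = 0" for x
  proof -
    have "((l0+l1+l2) - t)*x^2 + (c - (l0*l1 + l0*l2 + l1*l2))*x + (l0*l1*l2 - d)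
       = (x^3 - t*x^2 + c*x - d) - (x - l0)*(x - l1)*(x - l2)"
      by (simp add: algebra_simps power2_eq_square power3_eq_cube)
    also have "\<dots> = 0" using h[of x] by simp
    finally show ?thesis .
  qed
  from quad_zero[OF q] show "t = l0 + l1 + l2" "c = l0*l1 + l0*l2 + l1*l2" "d = l0*l1*l2"
    by simp_all
qed

lemma powsum3:
  fixes M :: "complex^3^3"
  assumes cp: "\<And>x. det (mat x - M) = (x - l0)*(x - l1)*(x - l2)"
  shows "trace (matpow M n) = l0^n + l1^n + l2^n"
proof -
  define t where "t = trace M"
  define c where "c = c2 M"
  define d where "d = det M"
  have h: "\<And>x. x^3 - t*x^2 + c*x - d = (x - l0)*(x - l1)*(x - l2)"
    unfolding t_def c_def d_def charpoly3[symmetric] by (rule cp)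
  note co = coeffs3[OF h]
  have root: "l^3 - t*l^2 + c*l - d = 0" if "l = l0 \<or> l = l1 \<or> l = l2" for l
    using h[of l] that by auto
  have rootm: "l^(Suc (Suc (Suc m))) = t * l^(Suc (Suc m)) - c * l^(Suc m) + d * l^m"
    if "l = l0 \<or> l = l1 \<or> l = l2" for l m
  proof -
    have "l^(Suc (Suc (Suc m))) - (t * l^(Suc (Suc m)) - c * l^(Suc m) + d * l^m)
        = l^m * (l^3 - t*l^2 + c*l - d)"
      by (simp add: algebra_simps power2_eq_square power3_eq_cube)
    also have "\<dots> = 0" using root[OF that] by simp
    finally show ?thesis by simp
  qed
  have rec: "trace (matpow M (Suc (Suc (Suc m)))) =
      t * trace (matpow M (Suc (Suc m))) - c * trace (matpow M (Suc m)) + d * trace (matpow M m)" for m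
  proof -
    have "matpow M (Suc (Suc (Suc m))) = (M ** (M ** M)) ** matpow M m"
      by (simp add: matrix_mul_assoc)
    also have "\<dots> = mat t ** ((M ** M) ** matpow M m) - mat c ** (M ** matpow M m) + mat d ** matpow M m"
      unfolding CH3 t_def c_def d_def
      by (simp add: matrix_sub_rdistrib matrix_add_rdistrib' matrix_mul_assoc)
    also have "(M ** M) ** matpow M m = matpow M (Suc (Suc m))"
      by (simp add: matrix_mul_assoc)
    finally show ?thesis
      by (simp add: trace_add trace_sub trace_mat_mult)
  qed
  show ?thesis
  proof (induction n rule: less_induct)
    case (less n)
    consider "n = 0" | "n = 1" | "n = 2" | m where "n = Suc (Suc (Suc m))"
      by (metis One_nat_def Suc_1 not0_implies_Suc)
    then show ?case
    proof cases
      case 1 then show ?thesis by (simp add: trace_I)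
    next
      case 2 then show ?thesis using co(1) t_def by simp
    next
      case 3
      have "trace (matpow M 2) = trace (M ** M)" by (simp add: numeral_2_eq_2)
      also have "\<dots> = l0^2 + l1^2 + l2^2"
        unfolding trace_sq3 t_def[symmetric] c_def[symmetric] co(1) co(2)
        by (simp add: algebra_simps power2_eq_square)
      finally show ?thesis using 3 by simp
    next
      case 4
      have IH: "trace (matpow M k) = l0^k + l1^k + l2^k" if "k < n" for k
        using less that by blast
      have "trace (matpow M n) = t * trace (matpow M (Suc (Suc m))) - c * trace (matpow M (Suc m)) + d * trace (matpow M m)"
        using rec 4 by simp
      also have "\<dots> = t * (l0^(Suc (Suc m)) + l1^(Suc (Suc m)) + l2^(Suc (Suc m)))
         - c * (l0^(Suc m) + l1^(Suc m) + l2^(Suc m)) + d * (l0^m + l1^m + l2^m)"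
        using IH[of "Suc (Suc m)"] IH[of "Suc m"] IH[of m] 4 by simp
      also have "\<dots> = (t * l0^(Suc (Suc m)) - c * l0^(Suc m) + d * l0^m)
          + (t * l1^(Suc (Suc m)) - c * l1^(Suc m) + d * l1^m)
          + (t * l2^(Suc (Suc m)) - c * l2^(Suc m) + d * l2^m)"
        by (simp add: algebra_simps)
      also have "\<dots> = l0^n + l1^n + l2^n"
        using rootm[of l0 m] rootm[of l1 m] rootm[of l2 m] unfolding 4 by simp_all
      finally show ?thesis .
    qed
  qed
qed

lemma norm_vec_le_sum: "norm (x::'a::real_normed_vector^'n) \<le> (\<Sum>i\<in>UNIV. norm (x$i))"
  by (simp add: norm_vec_def L2_set_le_sum)

lemma matpow_entry_bound:
  fixes B :: "complex^3^3"
  defines "\<beta> \<equiv> (\<Sum>i\<in>UNIV. \<Sum>j\<in>UNIV. norm (B$i$j))"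
  shows "norm (matpow B n $ i $ j) \<le> (real CARD(3) * \<beta>)^n"
proof (induction n arbitrary: i j)
  case 0 then show ?case by (simp add: mat_def)
next
  case (Suc n)
  have bB: "norm (B$i$k) \<le> \<beta>" for i k
  proof -
    have "norm (B$i$k) \<le> (\<Sum>j\<in>UNIV. norm (B$i$j))"
      by (rule member_le_sum) auto
    also have "\<dots> \<le> \<beta>" unfolding \<beta>_def
      by (rule member_le_sum[where f="\<lambda>i. \<Sum>j\<in>UNIV. norm (B$i$j)"]) (auto intro: sum_nonneg)
    finally show ?thesis .
  qed
  have b0: "0 \<le> \<beta>" unfolding \<beta>_def by (intro sum_nonneg) auto
  have pw: "norm (B$i$k * matpow B n $ k $ j) \<le> \<beta> * (real CARD(3) * \<beta>)^n" for k
    unfolding norm_mult by (rule mult_mono[OF bB Suc.IH b0 norm_ge_zero])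
  have "matpow B (Suc n) $ i $ j = (\<Sum>k\<in>UNIV. B$i$k * matpow B n $ k $ j)" by (simp add: mmult_nth)
  then have "norm (matpow B (Suc n) $ i $ j) \<le> (\<Sum>k\<in>UNIV. norm (B$i$k * matpow B n $ k $ j))"
    by (metis norm_sum)
  also have "\<dots> \<le> (\<Sum>k\<in>(UNIV::3 set). \<beta> * (real CARD(3) * \<beta>)^n)"
    by (rule sum_mono) (rule pw)
  also have "\<dots> = (real CARD(3) * \<beta>)^Suc n" by simp
  finally show ?case .
qed

lemma summable_mexp: "summable (\<lambda>n. (1 / fact n) *\<^sub>R matpow (B::complex^3^3) n)"
proof -
  define \<beta> where "\<beta> = (\<Sum>i\<in>UNIV. \<Sum>j\<in>UNIV. norm (B$i$j))"
  define C where "C = real CARD(3)"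
  have nb: "norm (matpow B n) \<le> C * C * (C * \<beta>)^n" for n
  proof -
    have "norm (matpow B n) \<le> (\<Sum>i\<in>UNIV. norm (matpow B n $ i))" by (rule norm_vec_le_sum)
    also have "\<dots> \<le> (\<Sum>i\<in>(UNIV::3 set). \<Sum>j\<in>(UNIV::3 set). (C * \<beta>)^n)"
      apply (rule sum_mono)
      apply (rule order_trans[OF norm_vec_le_sum])
      apply (rule sum_mono)
      using matpow_entry_bound[of B n] unfolding \<beta>_def C_def by blast
    also have "\<dots> = C * C * (C * \<beta>)^n" by (simp add: C_def)
    finally show ?thesis .
  qed
  have "summable (\<lambda>n. (C * C) * (inverse (fact n) * (C * \<beta>)^n))"
    by (rule summable_mult) (rule summable_exp)
  then show ?thesis
  proof (rule summable_comparison_test'[where N=0])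
    fix n :: nat
    have "norm ((1 / fact n) *\<^sub>R matpow B n) = inverse (fact n) * norm (matpow B n)"
      by (simp add: divide_inverse)
    also have "\<dots> \<le> inverse (fact n) * (C * C * (C * \<beta>)^n)"
      by (rule mult_left_mono[OF nb]) simp
    finally show "norm ((1 / fact n) *\<^sub>R matpow B n) \<le> (C * C) * (inverse (fact n) * (C * \<beta>)^n)"
      by (simp add: mult_ac)
  qed
qed

lemma bl_trace: "bounded_linear (trace :: complex^'n^'n \<Rightarrow> complex)"
proof -
  have "trace = (\<lambda>M::complex^'n^'n. \<Sum>i\<in>UNIV. (\<lambda>v. v $ i) ((\<lambda>M. M $ i) M))"
    by (simp add: fun_eq_iff trace_def)
  moreover have "bounded_linear (\<lambda>M::complex^'n^'n. \<Sum>i\<in>UNIV. (\<lambda>v. v $ i) ((\<lambda>M. M $ i) M))"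
    by (intro bounded_linear_sum bounded_linear_compose[OF bounded_linear_vec_nth bounded_linear_vec_nth])
  ultimately show ?thesis by simp
qed

lemma trace_scaleR: "trace (a *\<^sub>R (M::complex^'n^'n)) = a *\<^sub>R trace M"
  by (simp add: trace_def scaleR_sum_right)

lemma mat_mvec: "mat \<mu> *v (v::'a::field^'n) = \<mu> *s v"
proof -
  have "(mat \<mu> *v v) $ i = \<mu> * v$i" for i
  proof -
    have "(mat \<mu> *v v) $ i = (\<Sum>j\<in>UNIV. (if i = j then \<mu> else 0) * v$j)"
      by (simp add: matrix_vector_mult_def mat_def)
    also have "\<dots> = (\<Sum>j\<in>UNIV. if i = j then \<mu> * v$j else 0)"
      by (rule sum.cong) auto
    also have "\<dots> = \<mu> * v$i" by simp
    finally show ?thesis .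
  qed
  then show ?thesis by (simp add: vec_eq_iff)
qed

lemma eig_iff:
  fixes M :: "'a::field^'n^'n"
  shows "(\<exists>v. v \<noteq> 0 \<and> M *v v = \<mu> *s v) \<longleftrightarrow> det (mat \<mu> - M) = 0"
proof -
  have key: "M *v v = \<mu> *s v \<longleftrightarrow> (mat \<mu> - M) *v v = 0" for v
  proof -
    have "(mat \<mu> - M) *v v = \<mu> *s v - M *v v"
      by (simp only: matrix_vector_mult_diff_rdistrib mat_mvec)
    then show ?thesis by auto
  qed
  have i1: "det (mat \<mu> - M) \<noteq> 0 \<longleftrightarrow> invertible (mat \<mu> - M)"
    by (rule invertible_det_nz[symmetric])
  have i2: "invertible (mat \<mu> - M) \<longleftrightarrow> (\<forall>x. (mat \<mu> - M) *v x = 0 \<longrightarrow> x = 0)"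
    unfolding invertible_left_inverse matrix_left_invertible_ker ..
  show ?thesis using key i1 i2 by metis
qed

lemma trace_mexp3:
  fixes A :: "complex^3^3"
  assumes cp: "\<And>x. det (mat x - A) = (x - l0)*(x - l1)*(x - l2)"
  shows "trace (mexp (mat c ** A)) = exp (c*l0) + exp (c*l1) + exp (c*l2)"
proof -
  let ?B = "mat c ** A"
  have "(\<lambda>n. (1 / fact n) *\<^sub>R matpow ?B n) sums mexp ?B"
    unfolding mexp_def by (rule summable_sums[OF summable_mexp])
  from bounded_linear.sums[OF bl_trace this]
  have s1: "(\<lambda>n. trace ((1 / fact n) *\<^sub>R matpow ?B n)) sums trace (mexp ?B)" .
  have e: "trace ((1 / fact n) *\<^sub>R matpow ?B n) = (c*l0)^n /\<^sub>R fact n + (c*l1)^n /\<^sub>R fact n + (c*l2)^n /\<^sub>R fact n" for n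
    unfolding trace_scaleR matpow_smul trace_mat_mult powsum3[OF cp]
    by (simp add: power_mult_distrib algebra_simps divide_inverse)
  have s2: "(\<lambda>n. (c*l0)^n /\<^sub>R fact n + (c*l1)^n /\<^sub>R fact n + (c*l2)^n /\<^sub>R fact n) sums (exp (c*l0) + exp (c*l1) + exp (c*l2))"
    by (intro sums_add exp_converges)
  from s1 s2 show ?thesis unfolding e by (rule sums_unique2)
qed

lemma nsq: "z * cnj z = (complex_of_real (cmod z))^2"
  using complex_norm_square[of z] by simp

lemma herm_real:
  fixes M :: "complex^'n^'n"
  assumes h: "\<And>i j. M$j$i = cnj (M$i$j)" and v0: "v \<noteq> 0" and ev: "M *v v = \<mu> *s v"
  shows "Im \<mu> = 0"
proof -
  define q where "q = (\<Sum>i\<in>UNIV. cnj (v$i) * (\<Sum>j\<in>UNIV. M$i$j * v$j))"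
  define S where "S = (\<Sum>i\<in>UNIV. (norm (v$i))^2)"
  have mv: "(\<Sum>j\<in>UNIV. M$i$j * v$j) = \<mu> * v$i" for i
    using ev by (simp add: vec_eq_iff matrix_vector_mult_def)
  have q1: "q = \<mu> * of_real S"
    unfolding q_def S_def mv of_real_sum sum_distrib_left
    by (rule sum.cong) (simp_all add: nsq mult_ac)
  have "cnj q = (\<Sum>i\<in>UNIV. \<Sum>j\<in>UNIV. v$i * M$j$i * cnj (v$j))"
    unfolding q_def by (simp add: h[symmetric] sum_distrib_left mult_ac)
  also have "\<dots> = (\<Sum>j\<in>UNIV. \<Sum>i\<in>UNIV. v$i * M$j$i * cnj (v$j))"
    by (rule sum.swap)
  also have "\<dots> = q"
    unfolding q_def by (simp add: sum_distrib_left mult_ac)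
  finally have q2: "cnj q = q" .
  obtain i where vi: "v$i \<noteq> 0" using v0 by (auto simp: vec_eq_iff)
  have "0 < (norm (v$i))^2" using vi by simp
  also have "\<dots> \<le> S" unfolding S_def by (rule member_le_sum) auto
  finally have Sp: "0 < S" .
  from q1 q2 have "cnj \<mu> * of_real S = \<mu> * of_real S" by simp
  then have "cnj \<mu> = \<mu>" using Sp by simp
  then have "Im (cnj \<mu>) = Im \<mu>" by simp
  then show ?thesis by simp
qed

definition Dp :: "real^8 \<Rightarrow> real" where
  "Dp r = (r$7^2/3 - r$2^2) * (-2*r$7 * sqrt 3 / 3)
     + 2*(r$0*r$3*r$5 - r$1*r$3*r$6 + r$0*r$4*r$6 + r$1*r$4*r$5)
     - (r$2 + r$7 * sqrt 3 / 3)*(r$5^2 + r$6^2) - (- r$2 + r$7 * sqrt 3 / 3)*(r$3^2 + r$4^2)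
     + (2*r$7 * sqrt 3 / 3)*(r$0^2 + r$1^2)"

lemma s3: "sqrt 3 * sqrt 3 = (3::real)" "sqrt 3 * (sqrt 3 * x) = 3 * (x::real)"
  by (simp_all add: mult.assoc[symmetric])

lemma norm8: "norm (r::real^8) ^ 2 = r$0^2 + r$1^2 + r$2^2 + r$3^2 + r$4^2 + r$5^2 + r$6^2 + r$7^2"
proof -
  have "norm r ^ 2 = (\<Sum>i\<in>UNIV. (r$i)^2)"
    unfolding norm_vec_def L2_set_def by (simp add: sum_nonneg)
  then show ?thesis by (simp add: sum8 add.assoc)
qed

lemma inv_s3: "x / sqrt 3 = x * sqrt 3 / (3::real)"
  by (simp add: field_simps)

lemmas rLam_e = rLam_entries[unfolded inv_s3]

lemma trace_rLam: "trace (rLam r) = 0"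
  by (simp add: trace_def sum_3 rLam_e algebra_simps)

lemma c2_rLam: "c2 (rLam r) = - of_real (norm r ^ 2)"
  unfolding norm8 c2_def rLam_e
  by (simp add: complex_eq_iff algebra_simps power2_eq_square s3)

lemma det_rLam: "det (rLam r) = of_real (Dp r)"
  unfolding det_3 rLam_e Dp_def
  by (simp add: complex_eq_iff field_simps power2_eq_square s3)

lemma cp_rLam: "det (mat x - rLam r) = x^3 - of_real (norm r ^ 2) * x - of_real (Dp r)"
  unfolding charpoly3 trace_rLam c2_rLam det_rLam by simp

lemma herm_rLam: "rLam r $ j $ i = cnj (rLam r $ i $ j)"
  using exhaust_3[of i] exhaust_3[of j] by (auto simp: rLam_e)

lemma eig_real: "det (mat z - rLam r) = 0 \<Longrightarrow> Im z = 0"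
  using eig_iff[of "rLam r" z] herm_real[OF herm_rLam] by blast

lemma cube_bound:
  fixes a D :: real
  assumes "3 * t^2 \<le> 4 * a" "D = t^3 - a * t"
  shows "27 * D^2 \<le> 4 * a^3"
proof -
  have "4 * a^3 - 27 * D^2 = (4*a - 3*t^2) * (3*t^2 - a)^2"
    unfolding assms(2) by (simp add: power2_eq_square power3_eq_cube algebra_simps)
  also have "\<dots> \<ge> 0" using assms(1) by simp
  finally show ?thesis by simp
qed

lemma real_root:
  fixes a D :: real
  assumes a: "0 \<le> a"
  shows "\<exists>t. t^3 - a*t - D = 0"
proof -
  define b where "b = 1 + a + \<bar>D\<bar>"
  have b1: "1 \<le> b" and ba: "a + 1 \<le> b" and bD: "\<bar>D\<bar> \<le> b" using a unfolding b_def by auto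
  have "b * b \<ge> b * (a + 1)" using ba b1 by (intro mult_left_mono) auto
  moreover have "b * a \<ge> 1 * a" using b1 a by (intro mult_right_mono) auto
  ultimately have bb: "b * b - a \<ge> b" by (simp add: algebra_simps)
  have "b * (b * b - a) \<ge> b * 1" using bb b1 by (intro mult_left_mono) auto
  then have q: "b * (b * b - a) \<ge> \<bar>D\<bar>" using bD by simp
  have f1: "(-b)^3 - a*(-b) - D \<le> 0"
  proof -
    have "(-b)^3 - a*(-b) - D = - (b * (b * b - a)) - D" by (simp add: power3_eq_cube algebra_simps)
    then show ?thesis using q by (simp add: abs_le_iff)
  qed
  have f2: "0 \<le> b^3 - a*b - D"
  proof -
    have "b^3 - a*b - D = b * (b * b - a) - D" by (simp add: power3_eq_cube algebra_simps)
    then show ?thesis using q by (simp add: abs_le_iff)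
  qed
  have "\<exists>x. -b \<le> x \<and> x \<le> b \<and> x^3 - a*x - D = 0"
    by (rule IVT'[of "\<lambda>x. x^3 - a*x - D"]) (use f1 f2 b1 in \<open>auto intro!: continuous_intros\<close>)
  then show ?thesis by blast
qed

lemma disc_bound: "27 * (Dp r)^2 \<le> 4 * (norm r ^ 2)^3"
proof -
  define a where "a = norm r ^ 2"
  define D where "D = Dp r"
  have a0: "0 \<le> a" unfolding a_def by simp
  obtain t where t: "t^3 - a*t - D = 0" using real_root[OF a0] by blast
  have "3 * t^2 \<le> 4 * a"
  proof (rule ccontr)
    assume "\<not> 3 * t^2 \<le> 4 * a"
    then have pos: "0 < 3 * t^2 - 4 * a" by simp
    define w where "w = sqrt (3 * t^2 - 4 * a)"
    have w0: "0 < w" unfolding w_def using pos by simp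
    have w2: "w * w = 3 * t^2 - 4 * a" unfolding w_def using pos by simp
    define z where "z = Complex (- t / 2) (w / 2)"
    have q0: "z * z + of_real t * z + of_real (t^2 - a) = 0"
      unfolding z_def using w2 by (simp add: complex_eq_iff power2_eq_square field_simps)
    have "det (mat z - rLam r) = (z - of_real t) * (z * z + of_real t * z + of_real (t^2 - a))"
    proof -
      have tr: "t*(t*t) = D + a*t" using t by (simp add: power3_eq_cube algebra_simps)
      have tc: "complex_of_real t * (complex_of_real t * complex_of_real t) = complex_of_real D + complex_of_real a * complex_of_real t"
        using arg_cong[OF tr, of complex_of_real] by simp
      show ?thesis unfolding cp_rLam a_def[symmetric] D_def[symmetric]
        using tc by (simp add: algebra_simps power2_eq_square power3_eq_cube)
    qed
    also have "\<dots> = 0" using q0 by simp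
    finally have "Im z = 0" by (rule eig_real)
    then show False using w0 unfolding z_def by simp
  qed
  moreover have "D = t^3 - a * t" using t by simp
  ultimately show ?thesis using cube_bound unfolding a_def D_def by blast
qed

definition Xf :: "real^8 \<Rightarrow> real" where
  "Xf r = - (3 * sqrt 3 / (2 * norm r ^ 3)) * Dp r"

lemma X_bound:
  assumes "r \<noteq> 0" shows "\<bar>Xf r\<bar> \<le> 1"
proof -
  define N where "N = norm r"
  have N0: "0 < N" using assms unfolding N_def by simp
  have "(Xf r)^2 = 27 * (Dp r)^2 / (4 * (N^2)^3)"
    unfolding Xf_def N_def[symmetric] using N0
    by (simp add: power_mult_distrib power_divide field_simps power2_eq_square power3_eq_cube s3)
  also have "\<dots> \<le> 1" using disc_bound[of r] N0 unfolding N_def[symmetric] by simp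
  finally show ?thesis by (simp add: abs_square_le_1)
qed

lemma phi_eq:
  assumes "r \<noteq> 0" shows "phi r = arcsin (Xf r) / 3"
proof -
  have b: "-1 \<le> Xf r" "Xf r \<le> 1" using X_bound[OF assms] by auto
  have cond: "(complex_of_real (sin (3 * \<phi>)) =
        - complex_of_real (3 * sqrt 3 / (2 * norm r ^ 3)) * det (rLam r)) \<longleftrightarrow> sin (3*\<phi>) = Xf r" for \<phi>
  proof -
    have "- complex_of_real (3 * sqrt 3 / (2 * norm r ^ 3)) * det (rLam r) = complex_of_real (Xf r)"
      unfolding det_rLam Xf_def by simp
    then show ?thesis by simp
  qed
  show ?thesis unfolding phi_def cond
  proof (rule the_equality)
    show "arcsin (Xf r) / 3 \<in> {- pi / 6..pi / 6} \<and> sin (3 * (arcsin (Xf r) / 3)) = Xf r"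
      using arcsin_bounded[OF b] b by auto
  next
    fix \<phi> assume h: "\<phi> \<in> {- pi / 6..pi / 6} \<and> sin (3 * \<phi>) = Xf r"
    then have "arcsin (sin (3*\<phi>)) = 3*\<phi>" by (intro arcsin_sin) auto
    then show "\<phi> = arcsin (Xf r) / 3" using h by simp
  qed
qed

lemma sin3: "sin (3*(x::real)) = 3 * sin x - 4 * sin x ^ 3"
proof -
  have "sin (3*x) = sin (2*x + x)" by simp
  also have "\<dots> = 3 * sin x - 4 * sin x ^ 3"
    unfolding sin_add sin_double cos_double
    using sin_cos_squared_add[of x] by algebra
  finally show ?thesis .
qed

lemma trig_e1:
  fixes N x c u :: real
  shows "2 * N * u / 3 * x + 2 * N * u / 3 * (- x / 2 + u / 2 * c) + 2 * N * u / 3 * (- x / 2 - u / 2 * c) = 0"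
  by algebra

lemma trig_e2:
  fixes N x c u :: real
  assumes u: "u * u = 3" and sc: "x^2 + c^2 = 1"
  shows "(2 * N * u / 3 * x) * (2 * N * u / 3 * (- x / 2 + u / 2 * c)) + (2 * N * u / 3 * x) * (2 * N * u / 3 * (- x / 2 - u / 2 * c))
       + (2 * N * u / 3 * (- x / 2 + u / 2 * c)) * (2 * N * u / 3 * (- x / 2 - u / 2 * c)) = - (N * N)"
proof -
  have cc: "c * c = 1 - x * x" using sc by (simp add: power2_eq_square algebra_simps)
  have "(2 * N * u / 3 * x) * (2 * N * u / 3 * (- x / 2 + u / 2 * c)) + (2 * N * u / 3 * x) * (2 * N * u / 3 * (- x / 2 - u / 2 * c))
       + (2 * N * u / 3 * (- x / 2 + u / 2 * c)) * (2 * N * u / 3 * (- x / 2 - u / 2 * c))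
     = - (N * N) * (u * u) * (3 * (x * x) + (u * u) * (c * c)) / 9"
    by (simp add: field_simps power2_eq_square)
  also have "\<dots> = - (N * N) * 3 * (3 * (x * x) + 3 * (1 - x * x)) / 9" unfolding u cc ..
  also have "\<dots> = - (N * N)" by (simp add: field_simps)
  finally show ?thesis .
qed

lemma trig_e3:
  fixes N x c u :: real
  assumes u: "u * u = 3" and sc: "x^2 + c^2 = 1"
  shows "(2 * N * u / 3 * x) * (2 * N * u / 3 * (- x / 2 + u / 2 * c)) * (2 * N * u / 3 * (- x / 2 - u / 2 * c)) = - (2 * (N * N * N) * u / 9) * (3 * x - 4 * x^3)"
proof -
  have cc: "c * c = 1 - x * x" using sc by (simp add: power2_eq_square algebra_simps)
  have "(2 * N * u / 3 * x) * (2 * N * u / 3 * (- x / 2 + u / 2 * c)) * (2 * N * u / 3 * (- x / 2 - u / 2 * c))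
     = 2 * (N * N * N) * ((u * u) * u) * x * (x * x - (u * u) * (c * c)) / 27"
    by (simp add: field_simps power2_eq_square)
  also have "\<dots> = 2 * (N * N * N) * (3 * u) * x * (x * x - 3 * (1 - x * x)) / 27" unfolding u cc ..
  also have "\<dots> = - (2 * (N * N * N) * u / 9) * (3 * x - 4 * x^3)" by (simp add: field_simps power3_eq_cube)
  finally show ?thesis .
qed

definition lam :: "real^8 \<Rightarrow> nat \<Rightarrow> real" where
  "lam r k = 2 / sqrt 3 * norm r * sin (theta r k)"

lemma c23: "cos (2*pi/3) = -1/2"
proof -
  have "cos (2*pi/3) = cos (pi - pi/3)" by (simp add: field_simps)
  also have "\<dots> = -1/2" by (simp only: cos_pi_minus cos_60)
  finally show ?thesis .
qed

lemma s23: "sin (2*pi/3) = sqrt 3/2"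
proof -
  have "sin (2*pi/3) = sin (pi - pi/3)" by (simp add: field_simps)
  also have "\<dots> = sqrt 3/2" by (simp only: sin_pi_minus sin_60)
  finally show ?thesis .
qed

lemma c43: "cos (4*pi/3) = -1/2"
proof -
  have "cos (4*pi/3) = cos (pi/3 + pi)" by (simp add: field_simps)
  also have "\<dots> = -1/2" by (simp only: cos_periodic_pi cos_60)
  finally show ?thesis .
qed

lemma s43: "sin (4*pi/3) = - (sqrt 3/2)"
proof -
  have "sin (4*pi/3) = sin (pi/3 + pi)" by (simp add: field_simps)
  also have "\<dots> = - (sqrt 3/2)" by (simp only: sin_periodic_pi sin_60)
  finally show ?thesis .
qed

lemma sin_thetas:
  "sin (theta r 0) = sin (phi r)"
  "sin (theta r 1) = - sin (phi r) / 2 + sqrt 3 / 2 * cos (phi r)"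
  "sin (theta r 2) = - sin (phi r) / 2 - sqrt 3 / 2 * cos (phi r)"
proof -
  show "sin (theta r 0) = sin (phi r)" by (simp add: theta_def)
  have "theta r 1 = phi r + 2*pi/3" by (simp add: theta_def)
  then show "sin (theta r 1) = - sin (phi r) / 2 + sqrt 3 / 2 * cos (phi r)"
    by (simp only: sin_add c23 s23) (simp add: algebra_simps)
  have "theta r 2 = phi r + 4*pi/3" by (simp add: theta_def)
  then show "sin (theta r 2) = - sin (phi r) / 2 - sqrt 3 / 2 * cos (phi r)"
    by (simp only: sin_add c43 s43) (simp add: algebra_simps)
qed

lemma lam_form: "lam r k = 2 * norm r * sqrt 3 / 3 * sin (theta r k)"
  unfolding lam_def by (simp add: inv_s3)

lemma lam_e:
  assumes "r \<noteq> 0"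
  shows "lam r 0 + lam r 1 + lam r 2 = 0"
    "lam r 0 * lam r 1 + lam r 0 * lam r 2 + lam r 1 * lam r 2 = - (norm r ^ 2)"
    "lam r 0 * lam r 1 * lam r 2 = Dp r"
proof -
  define N where "N = norm r"
  define x where "x = sin (phi r)"
  define c where "c = cos (phi r)"
  define u where "u = sqrt 3"
  have u: "u * u = 3" unfolding u_def by simp
  have sc: "x^2 + c^2 = 1" unfolding x_def c_def by simp
  have l: "lam r 0 = 2 * N * u / 3 * x" "lam r 1 = 2 * N * u / 3 * (- x / 2 + u / 2 * c)"
       "lam r 2 = 2 * N * u / 3 * (- x / 2 - u / 2 * c)"
    unfolding lam_form sin_thetas N_def x_def c_def u_def by (simp_all add: field_simps)
  show "lam r 0 + lam r 1 + lam r 2 = 0" unfolding l by (rule trig_e1)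
  show "lam r 0 * lam r 1 + lam r 0 * lam r 2 + lam r 1 * lam r 2 = - (norm r ^ 2)"
    unfolding l trig_e2[OF u sc] N_def by (simp add: power2_eq_square)
  have b: "-1 \<le> Xf r" "Xf r \<le> 1" using X_bound[OF assms] by auto
  have s3p: "sin (3 * phi r) = Xf r" unfolding phi_eq[OF assms] using b by simp
  have N0: "N \<noteq> 0" using assms unfolding N_def by simp
  have x3: "3 * x - 4 * x^3 = Xf r" unfolding x_def using sin3[of "phi r"] s3p by simp
  have "lam r 0 * lam r 1 * lam r 2 = - (2 * (N * N * N) * u / 9) * (3 * x - 4 * x^3)"
    unfolding l by (rule trig_e3[OF u sc])
  also have "\<dots> = - (2 * (N * N * N) * u / 9) * Xf r" unfolding x3 ..
  also have "\<dots> = (u * u) / 3 * Dp r"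
    unfolding Xf_def N_def[symmetric] u_def[symmetric] using N0
    by (simp add: field_simps power3_eq_cube)
  also have "\<dots> = Dp r" unfolding u by simp
  finally show "lam r 0 * lam r 1 * lam r 2 = Dp r" .
qed

lemma cp_lam:
  assumes "r \<noteq> 0"
  shows "det (mat x - rLam r) = (x - of_real (lam r 0)) * (x - of_real (lam r 1)) * (x - of_real (lam r 2))"
proof -
  have "(x - of_real (lam r 0)) * (x - of_real (lam r 1)) * (x - of_real (lam r 2))
    = x^3 - of_real (lam r 0 + lam r 1 + lam r 2) * x^2
      + of_real (lam r 0 * lam r 1 + lam r 0 * lam r 2 + lam r 1 * lam r 2) * x
      - of_real (lam r 0 * lam r 1 * lam r 2)"
    by (simp add: algebra_simps power2_eq_square power3_eq_cube)
  also have "\<dots> = det (mat x - rLam r)"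
    unfolding lam_e[OF assms] cp_rLam by simp
  finally show ?thesis by simp
qed

lemma atMost2: "{..2::nat} = {0,1,2}" by auto

lemma part1:
  assumes "r \<noteq> 0"
  shows "{\<mu>. \<exists>v. v \<noteq> 0 \<and> rLam r *v v = \<mu> *s v}
           = {complex_of_real (2 / sqrt 3 * norm r * sin (theta r k)) | k. k \<le> 2}"
proof -
  have "{\<mu>. \<exists>v. v \<noteq> 0 \<and> rLam r *v v = \<mu> *s v} = {\<mu>. det (mat \<mu> - rLam r) = 0}"
    using eig_iff by blast
  also have "\<dots> = {of_real (lam r 0), of_real (lam r 1), of_real (lam r 2)}"
    unfolding cp_lam[OF assms] by auto
  also have "\<dots> = {complex_of_real (lam r k) | k. k \<le> 2}"
    by (auto simp: le_Suc_eq numeral_2_eq_2)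
  finally show ?thesis unfolding lam_def .
qed

lemma part2:
  assumes "r \<noteq> 0"
  shows "det (mat x - rLam r) = (\<Prod>k\<le>2. x - complex_of_real (2 / sqrt 3 * norm r * sin (theta r k)))"
  unfolding cp_lam[OF assms] atMost2 lam_def by (simp add: mult_ac)

lemma sq32: "sqrt (3/2) * (2 / sqrt 3) = sqrt 2"
proof -
  have a: "sqrt (3/2) * sqrt 2 = sqrt 3" by (simp add: real_sqrt_mult[symmetric])
  have b: "sqrt 2 * sqrt 2 = (2::real)" by simp
  have "sqrt (3/2) * (2 / sqrt 3) = (sqrt (3/2) * sqrt 2) * sqrt 2 / sqrt 3"
    using b by (simp add: field_simps)
  also have "\<dots> = sqrt 2" unfolding a by simp
  finally show ?thesis .
qed

lemma part3:
  assumes "r \<noteq> 0"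
  shows "K3 r = (\<Sum>k\<le>2. exp (- \<i> * complex_of_real (sqrt 2 * norm r * sin (theta r k))))"
proof -
  have "K3 r = exp ((- \<i> * of_real (sqrt (3/2))) * of_real (lam r 0)) + exp ((- \<i> * of_real (sqrt (3/2))) * of_real (lam r 1))
      + exp ((- \<i> * of_real (sqrt (3/2))) * of_real (lam r 2))"
    unfolding K3_def by (rule trace_mexp3[OF cp_lam[OF assms]])
  also have "\<dots> = (\<Sum>k\<le>2. exp (- \<i> * complex_of_real (sqrt 2 * norm r * sin (theta r k))))"
  proof -
    have e: "(- \<i> * of_real (sqrt (3/2))) * of_real (lam r k) = - \<i> * complex_of_real (sqrt 2 * norm r * sin (theta r k))" for k
    proof -
      have "sqrt (3/2) * lam r k = sqrt 2 * norm r * sin (theta r k)"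
        unfolding lam_def sq32[symmetric] by (simp add: mult_ac)
      then show ?thesis by (simp flip: of_real_mult)
    qed
    show ?thesis unfolding e atMost2 by (simp add: add.assoc)
  qed
  finally show ?thesis .
qed

definition Qf :: "real^8 \<Rightarrow> 8 \<Rightarrow> real" where
  "Qf r m = (\<Sum>i\<in>UNIV. \<Sum>j\<in>UNIV. r$i * r$j * dsym (idx8 i) (idx8 j) (idx8 m))"

lemma pvec_Qf: "pvec r $ m = Qf r m / norm r ^ 2"
  unfolding pvec_def Qf_def by (simp add: sum_divide_distrib)

lemma Qf_simps:
  "Qf r 0 = r$3*r$5 + r$4*r$6 + 2*r$0*r$7/sqrt 3"
  "Qf r 1 = r$4*r$5 - r$3*r$6 + 2*r$1*r$7/sqrt 3"
  "Qf r 2 = 2*r$2*r$7/sqrt 3 + (r$3^2 + r$4^2 - r$5^2 - r$6^2)/2"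
  "Qf r 3 = r$0*r$5 - r$1*r$6 + r$2*r$3 - r$3*r$7/sqrt 3"
  "Qf r 4 = r$0*r$6 + r$1*r$5 + r$2*r$4 - r$4*r$7/sqrt 3"
  "Qf r 5 = r$0*r$3 + r$1*r$4 - r$2*r$5 - r$5*r$7/sqrt 3"
  "Qf r 6 = r$0*r$4 - r$1*r$3 - r$2*r$6 - r$6*r$7/sqrt 3"
  "Qf r 7 = - (r$7^2)/sqrt 3 + r$2^2/sqrt 3 + (r$0^2 + r$1^2)/sqrt 3 - (r$3^2 + r$4^2 + r$5^2 + r$6^2)/(2 * sqrt 3)"
  unfolding Qf_def sum8 idx8_simps
  by (simp_all add: dsym_def field_simps power2_eq_square s3)

lemma has_derivative_vec_nth'[derivative_intros]:
  "(g has_derivative g') F \<Longrightarrow> ((\<lambda>x. g x $ i) has_derivative (\<lambda>h. g' h $ i)) F"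
  by (rule bounded_linear.has_derivative[OF bounded_linear_vec_nth])

lemma Dp_deriv: "(Dp has_derivative (\<lambda>h. 2 * (\<Sum>m\<in>UNIV. h$m * Qf r m))) (at r)"
proof -
  have eq: "(\<lambda>h. 2 * (\<Sum>m\<in>UNIV. h$m * Qf r m)) = (\<lambda>h. 2 * (h$0 * Qf r 0 + (h$1 * Qf r 1 + (h$2 * Qf r 2 +
     (h$3 * Qf r 3 + (h$4 * Qf r 4 + (h$5 * Qf r 5 + (h$6 * Qf r 6 + h$7 * Qf r 7))))))))"
    by (simp add: sum8)
  show ?thesis unfolding eq Qf_simps Dp_def[abs_def]
    by (auto intro!: derivative_eq_intros simp: fun_eq_iff field_simps power2_eq_square s3)
qed

definition lamA :: "nat \<Rightarrow> real^8 \<Rightarrow> real" where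
  "lamA k y = 2 / sqrt 3 * norm y * sin (arcsin (Xf y) / 3 + 2 * pi * real k / 3)"

lemma lamA_eq: "y \<noteq> 0 \<Longrightarrow> lamA k y = lam y k"
  unfolding lamA_def lam_def theta_def phi_eq by simp

lemma lam_root:
  assumes "y \<noteq> 0" "k \<le> 2"
  shows "lam y k ^ 3 - norm y ^ 2 * lam y k - Dp y = 0"
proof -
  have "det (mat (of_real (lam y k)) - rLam y) = 0"
    unfolding cp_lam[OF assms(1)] using assms(2) by (auto simp: le_Suc_eq numeral_2_eq_2)
  then have "complex_of_real (lam y k ^ 3 - norm y ^ 2 * lam y k - Dp y) = 0"
    unfolding cp_rLam by simp
  then show ?thesis by (simp only: of_real_eq_0_iff)
qed

lemma has_derivative_arcsin_comp:
  assumes "(g has_derivative g') (at x)" "-1 < g x" "g x < 1"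
  shows "((\<lambda>y. arcsin (g y)) has_derivative (\<lambda>h. g' h * inverse (sqrt (1 - (g x)\<^sup>2)))) (at x)"
  by (rule DERIV_compose_FDERIV[OF DERIV_arcsin[OF assms(2,3)] assms(1)])

lemma lamA_diff:
  assumes r0: "r \<noteq> 0" and X1: "\<bar>Xf r\<bar> < 1"
  shows "\<exists>L. (lamA k has_derivative L) (at r)"
proof -
  have X1': "-1 < - (3 * sqrt 3 / (2 * norm r ^ 3)) * Dp r" "- (3 * sqrt 3 / (2 * norm r ^ 3)) * Dp r < 1"
  proof -
    have a: "-1 < Xf r" "Xf r < 1" using X1 by (auto simp: abs_less_iff)
    then show "-1 < - (3 * sqrt 3 / (2 * norm r ^ 3)) * Dp r" "- (3 * sqrt 3 / (2 * norm r ^ 3)) * Dp r < 1"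
      unfolding Xf_def .
  qed
  show ?thesis unfolding lamA_def[abs_def] Xf_def
    by (rule exI, (rule derivative_intros has_derivative_arcsin_comp has_derivative_norm[OF r0] Dp_deriv X1' | simp add: r0)+)
qed

lemma lam_deriv_rel:
  assumes r0: "r \<noteq> 0" and L: "(lamA k has_derivative L) (at r)" and k: "k \<le> 2"
  shows "(3 * lam r k ^ 2 - norm r ^ 2) * L h = 2 * (r \<bullet> h) * lam r k + 2 * (\<Sum>m\<in>UNIV. h$m * Qf r m)"
proof -
  define G where "G y = lamA k y ^ 3 - norm y ^ 2 * lamA k y - Dp y" for y
  define D1 where "D1 h = 3 * lamA k r ^ 2 * L h - (2 * (r \<bullet> h) * lamA k r + norm r ^ 2 * L h)
      - 2 * (\<Sum>m\<in>UNIV. h$m * Qf r m)" for h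
  have dG: "(G has_derivative D1) (at r)"
    unfolding G_def[abs_def]
    apply (rule has_derivative_eq_rhs)
     apply (rule derivative_intros L has_derivative_norm[OF r0] Dp_deriv)+
    using r0 by (simp add: D1_def fun_eq_iff sgn_div_norm inner_commute field_simps power2_eq_square)
  have z: "G y = 0" if "dist y r < norm r" for y
  proof -
    have "y \<noteq> 0" using that by auto
    then show ?thesis unfolding G_def lamA_eq[OF \<open>y \<noteq> 0\<close>] using lam_root[OF _ k] by simp
  qed
  have d0: "(G has_derivative (\<lambda>h. 0)) (at r)"
    by (rule has_derivative_transform_within[OF has_derivative_const[of 0] _ _ z[symmetric]])
       (use r0 in auto)
  have "D1 = (\<lambda>h. 0)" by (rule has_derivative_unique[OF dG d0])
  then have "D1 h = 0" by simp
  then show ?thesis unfolding D1_def lamA_eq[OF r0] by (simp add: algebra_simps)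
qed

lemma sin3phi: "r \<noteq> 0 \<Longrightarrow> sin (3 * phi r) = Xf r"
  using X_bound[of r] unfolding phi_eq by (simp add: abs_le_iff)

lemma X_lt1:
  assumes r0: "r \<noteq> 0" and c: "cos (3 * phi r) \<noteq> 0"
  shows "\<bar>Xf r\<bar> < 1"
proof -
  have "(Xf r)^2 + (cos (3 * phi r))^2 = 1" using sin3phi[OF r0] sin_cos_squared_add[of "3 * phi r"] by simp
  moreover have "0 < (cos (3 * phi r))^2" using c by simp
  ultimately have "(Xf r)^2 < 1" by linarith
  then show ?thesis by (simp add: abs_square_less_1)
qed

lemma cos3theta: "k \<le> 2 \<Longrightarrow> cos (3 * theta r k) = cos (3 * phi r)"
proof -
  assume k: "k \<le> 2"
  then consider "k = 0" | "k = 1" | "k = 2" by linarith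
  then show ?thesis
  proof cases
    case 1 then show ?thesis by (simp add: theta_def)
  next
    case 2
    have "3 * theta r k = 3 * phi r + 2 * pi" using 2 by (simp add: theta_def algebra_simps)
    then show ?thesis by simp
  next
    case 3
    have "cos (3 * theta r k) = cos ((3 * phi r + 2 * pi) + 2 * pi)" using 3 by (simp add: theta_def algebra_simps)
    also have "\<dots> = cos (3 * phi r)" by (simp only: cos_periodic)
    finally show ?thesis .
  qed
qed

lemma d_nz:
  assumes r0: "r \<noteq> 0" and c: "cos (3 * phi r) \<noteq> 0" and k: "k \<le> 2"
  shows "1 - 2 * cos (2 * theta r k) \<noteq> 0"
proof
  assume h: "1 - 2 * cos (2 * theta r k) = 0"
  define x where "x = sin (theta r k)"
  have x2: "4 * x^2 = 1" using h unfolding x_def cos_double_sin by simp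
  have "sin (3 * theta r k) = x * (3 - 4 * x^2)" unfolding sin3 x_def by (simp add: power3_eq_cube power2_eq_square algebra_simps)
  also have "\<dots> = 2 * x" using x2 by simp
  finally have "(sin (3 * theta r k))^2 = 4 * x^2" by (simp add: power2_eq_square)
  then have "(sin (3 * theta r k))^2 = 1" using x2 by simp
  then have "(cos (3 * theta r k))^2 = 0" using sin_cos_squared_add[of "3 * theta r k"] by simp
  then have "cos (3 * theta r k) = 0" by simp
  then show False using c cos3theta[OF k] by simp
qed

lemma d_rel: "3 * lam r k ^ 2 - norm r ^ 2 = norm r ^ 2 * (1 - 2 * cos (2 * theta r k))"
  unfolding lam_def cos_double_sin by (simp add: power_mult_distrib power_divide algebra_simps)

lemma kappa: "2 * sqrt (3/2) = 3 * sqrt (2/(3::real))"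
proof -
  have a: "sqrt (3/2) * sqrt (2/3) = (1::real)" by (simp add: real_sqrt_mult[symmetric])
  have b: "sqrt (3/2) * sqrt (3/2) = (3/2::real)" by simp
  have "2 * sqrt (3/2) = 2 * sqrt (3/2) * (sqrt (3/2) * sqrt (2/3))" using a by simp
  also have "\<dots> = 2 * (sqrt (3/2) * sqrt (3/2)) * sqrt (2/3)" by (simp add: mult_ac)
  also have "\<dots> = 3 * sqrt (2/3)" unfolding b by simp
  finally show ?thesis .
qed

lemma E_eq: "exp ((- \<i> * of_real (sqrt (3/2))) * of_real (lam r k)) = exp (- \<i> * complex_of_real (sqrt 2 * norm r * sin (theta r k)))"
proof -
  have "sqrt (3/2) * lam r k = sqrt 2 * norm r * sin (theta r k)"
    unfolding lam_def sq32[symmetric] by (simp add: mult_ac)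
  then have e2: "(- \<i> * of_real (sqrt (3/2))) * of_real (lam r k) = - \<i> * complex_of_real (sqrt 2 * norm r * sin (theta r k))"
    by (metis mult.assoc of_real_mult)
  show ?thesis unfolding e2 ..
qed

lemma sum_lin:
  fixes K F1 F2 :: complex
  shows "(\<Sum>m\<in>UNIV. complex_of_real (h$m) * (K * (F1 * complex_of_real (p m) + F2 * complex_of_real (q m))))
    = K * F1 * complex_of_real (\<Sum>m\<in>UNIV. h$m * p m) + K * F2 * complex_of_real (\<Sum>m\<in>UNIV. h$m * q m)"
  by (simp add: of_real_sum sum_distrib_left sum.distrib algebra_simps)

lemma has_derivative_cexp:
  fixes g :: "'a::real_normed_vector \<Rightarrow> complex"
  assumes "(g has_derivative g') (at x within s)"
  shows "((\<lambda>x. exp (g x)) has_derivative (\<lambda>h. exp (g x) * g' h)) (at x within s)"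
  using has_derivative_compose[OF assms has_field_derivative_imp_has_derivative[OF DERIV_exp]] .

lemma main_deriv:
  assumes r0: "r \<noteq> 0" and c0: "cos (3 * phi r) \<noteq> 0"
  shows "(K3 has_derivative
            (\<lambda>h. \<Sum>m\<in>UNIV. complex_of_real (h $ m) *
               (- 3 * \<i> * complex_of_real (sqrt (2/3)) *
                  (F1 r * complex_of_real (pvec r $ m)
                   + F2 r * complex_of_real (r $ m / norm r))))) (at r)"
proof -
  have X1: "\<bar>Xf r\<bar> < 1" by (rule X_lt1[OF r0 c0])
  have "\<forall>k. \<exists>L. (lamA k has_derivative L) (at r)" using lamA_diff[OF r0 X1] by blast
  then obtain LL where LL: "\<And>k. (lamA k has_derivative LL k) (at r)" by metis
  define c where "c = - \<i> * complex_of_real (sqrt (3/2))"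
  define S where "S y = exp (c * of_real (lamA 0 y)) + exp (c * of_real (lamA 1 y)) + exp (c * of_real (lamA 2 y))" for y
  define DS where "DS h = exp (c * of_real (lamA 0 r)) * (c * of_real (LL 0 h))
     + exp (c * of_real (lamA 1 r)) * (c * of_real (LL 1 h)) + exp (c * of_real (lamA 2 r)) * (c * of_real (LL 2 h))" for h
  have dS: "(S has_derivative DS) (at r)"
    unfolding S_def[abs_def]
    apply (rule has_derivative_eq_rhs)
     apply (rule derivative_intros has_derivative_cexp LL)+
    by (simp add: DS_def fun_eq_iff algebra_simps)
  have eqK: "S y = K3 y" if "y \<in> UNIV" "dist y r < norm r" for y
  proof -
    have y0: "y \<noteq> 0" using that by auto
    show ?thesis unfolding K3_def trace_mexp3[OF cp_lam[OF y0]] S_def c_def lamA_eq[OF y0] ..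
  qed
  have dK: "(K3 has_derivative DS) (at r)"
    by (rule has_derivative_transform_within[OF dS _ _ eqK]) (use r0 in auto)
  show ?thesis
  proof (rule has_derivative_eq_rhs[OF dK], rule ext)
    fix h :: "real^8"
    define N where "N = norm r"
    define R where "R = r \<bullet> h"
    define QQ where "QQ = (\<Sum>m\<in>UNIV. h$m * Qf r m)"
    define E where "E k = exp (- \<i> * complex_of_real (sqrt 2 * norm r * sin (theta r k)))" for k
    define d where "d k = 1 - 2 * cos (2 * theta r k)" for k
    define sk where "sk k = sin (theta r k)" for k
    define A where "A k = (2 * R * lam r k + 2 * QQ) / (N^2 * d k)" for k
    define B where "B k = QQ / N^2 / d k + 2 / sqrt 3 * sk k / d k * (R / N)" for k
    have N0: "N \<noteq> 0" using r0 unfolding N_def by simp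
    have dk: "d k \<noteq> 0" if "k \<le> 2" for k using d_nz[OF r0 c0 that] unfolding d_def .
    have Ek: "exp (c * of_real (lamA k r)) = E k" for k
      unfolding lamA_eq[OF r0] c_def E_def by (rule E_eq)
    have LLk: "LL k h = A k" if k: "k \<le> 2" for k
    proof -
      have "(N^2 * d k) * LL k h = 2 * R * lam r k + 2 * QQ"
        using lam_deriv_rel[OF r0 LL k, of h] d_rel[of r k] unfolding N_def R_def QQ_def d_def by simp
      then show ?thesis unfolding A_def using N0 dk[OF k] by (simp add: field_simps)
    qed
    have AB: "sqrt (3/2) * A k = 3 * sqrt (2/3) * B k" if k: "k \<le> 2" for k
    proof -
      have l: "lam r k = 2 / sqrt 3 * N * sk k" unfolding lam_def N_def sk_def ..
      have s32: "sqrt (3/2) = 3 * sqrt (2/3) / (2::real)" using kappa by simp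
      show ?thesis unfolding A_def B_def l s32 using N0 dk[OF k]
        by (simp add: field_simps power2_eq_square)
    qed
    have trm: "exp (c * of_real (lamA k r)) * (c * of_real (LL k h)) = - \<i> * (E k * of_real (3 * sqrt (2/3) * B k))"
      if k: "k \<le> 2" for k
    proof -
      have "c * of_real (LL k h) = - \<i> * of_real (sqrt (3/2) * A k)"
        unfolding LLk[OF k] c_def by simp
      also have "\<dots> = - \<i> * of_real (3 * sqrt (2/3) * B k)" unfolding AB[OF k] ..
      finally show ?thesis unfolding Ek by (simp add: mult_ac)
    qed
    have DSh: "DS h = - \<i> * (E 0 * of_real (3 * sqrt (2/3) * B 0)) + - \<i> * (E 1 * of_real (3 * sqrt (2/3) * B 1))
        + - \<i> * (E 2 * of_real (3 * sqrt (2/3) * B 2))"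
      unfolding DS_def trm[of 0, OF le0] trm[of 1, OF one_le_numeral] trm[of 2, OF order_refl] ..
    define a where "a = complex_of_real (QQ / N^2)"
    define b where "b = complex_of_real (R / N)"
    define t where "t = complex_of_real (2 / sqrt 3)"
    define q where "q = complex_of_real (sqrt (2/3))"
    define w where "w k = complex_of_real (1 / d k)" for k
    define \<sigma> where "\<sigma> k = complex_of_real (sk k)" for k
    have Bc: "complex_of_real (3 * sqrt (2/3) * B k) = 3 * q * (a * w k + t * \<sigma> k * w k * b)" for k
    proof -
      have "3 * q * (a * w k + t * \<sigma> k * w k * b) = complex_of_real (3 * sqrt (2/3) * (QQ / N^2 * (1 / d k) + 2 / sqrt 3 * sk k * (1 / d k) * (R / N)))"
        unfolding a_def b_def t_def q_def w_def \<sigma>_def of_real_mult of_real_add by simp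
      also have "3 * sqrt (2/3) * (QQ / N^2 * (1 / d k) + 2 / sqrt 3 * sk k * (1 / d k) * (R / N)) = 3 * sqrt (2/3) * B k"
        unfolding B_def by simp
      finally show ?thesis by simp
    qed
    have F1w: "F1 r = E 0 * w 0 + E 1 * w 1 + E 2 * w 2"
      unfolding F1_def atMost2 E_def d_def w_def by (simp add: add.assoc)
    have F2w: "F2 r = t * (\<sigma> 0 * E 0 * w 0 + \<sigma> 1 * E 1 * w 1 + \<sigma> 2 * E 2 * w 2)"
      unfolding F2_def atMost2 E_def d_def w_def t_def \<sigma>_def sk_def by (simp add: add.assoc mult_ac)
    have s1: "(\<Sum>m\<in>UNIV. h$m * (pvec r $ m)) = QQ / N^2"
      unfolding pvec_Qf QQ_def N_def by (simp add: sum_divide_distrib)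
    have s2: "(\<Sum>m\<in>UNIV. h$m * (r $ m / norm r)) = R / N"
      unfolding R_def N_def inner_vec_def by (simp add: sum_divide_distrib mult.commute)
    have tgt: "(\<Sum>m\<in>UNIV. complex_of_real (h $ m) *
               (- 3 * \<i> * complex_of_real (sqrt (2/3)) *
                  (F1 r * complex_of_real (pvec r $ m)
                   + F2 r * complex_of_real (r $ m / norm r))))
        = - 3 * \<i> * complex_of_real (sqrt (2/3)) * F1 r * of_real (QQ / N^2)
          + - 3 * \<i> * complex_of_real (sqrt (2/3)) * F2 r * of_real (R / N)"
      unfolding sum_lin s1 s2 ..
    have "DS h = - \<i> * (E 0 * (3 * q * (a * w 0 + t * \<sigma> 0 * w 0 * b))) + - \<i> * (E 1 * (3 * q * (a * w 1 + t * \<sigma> 1 * w 1 * b)))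
        + - \<i> * (E 2 * (3 * q * (a * w 2 + t * \<sigma> 2 * w 2 * b)))"
      unfolding DSh Bc ..
    also have "\<dots> = - 3 * \<i> * q * (E 0 * w 0 + E 1 * w 1 + E 2 * w 2) * a
        + - 3 * \<i> * q * (t * (\<sigma> 0 * E 0 * w 0 + \<sigma> 1 * E 1 * w 1 + \<sigma> 2 * E 2 * w 2)) * b"
      by (simp add: algebra_simps)
    also have "\<dots> = (\<Sum>m\<in>UNIV. complex_of_real (h $ m) *
               (- 3 * \<i> * complex_of_real (sqrt (2/3)) *
                  (F1 r * complex_of_real (pvec r $ m)
                   + F2 r * complex_of_real (r $ m / norm r))))"
      unfolding tgt unfolding F1w F2w a_def b_def q_def ..
    finally show "DS h = (\<Sum>m\<in>UNIV. complex_of_real (h $ m) *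
               (- 3 * \<i> * complex_of_real (sqrt (2/3)) *
                  (F1 r * complex_of_real (pvec r $ m)
                   + F2 r * complex_of_real (r $ m / norm r))))" .
  qed
qed

theorem mainTheorem4:
  fixes r :: "real^8"
  assumes "r \<noteq> 0"
    and "cos (3 * phi r) \<noteq> 0"
  shows "{\<mu>. \<exists>v. v \<noteq> 0 \<and> rLam r *v v = \<mu> *s v}
           = {complex_of_real (2 / sqrt 3 * norm r * sin (theta r k)) | k. k \<le> 2}
       \<and> (\<forall>x. det (mat x - rLam r) =
              (\<Prod>k\<le>2. x - complex_of_real (2 / sqrt 3 * norm r * sin (theta r k))))
       \<and> K3 r = (\<Sum>k\<le>2. exp (- \<i> * complex_of_real (sqrt 2 * norm r * sin (theta r k))))
       \<and> (K3 has_derivative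
            (\<lambda>h. \<Sum>m\<in>UNIV. complex_of_real (h $ m) *
               (- 3 * \<i> * complex_of_real (sqrt (2/3)) *
                  (F1 r * complex_of_real (pvec r $ m)
                   + F2 r * complex_of_real (r $ m / norm r))))) (at r)"
  using part1[OF assms(1)] part2[OF assms(1)] part3[OF assms(1)] main_deriv[OF assms] by blast

end
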